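(* Let $n\ge 4$, $N=\{1,\dots,n\}$, fix distinct $i_1,i_2\in N$ and let $\hat N^c=N\setminus\{i_1,i_2\}$. Then the inequality $$x_{i_1i_2}+\sum_{j\in\hat N^c}\left(x_{i_1j}+x_{ji_1}\right)-\sum_{j\in\hat N^c}x_{ji_2}-\sum_{j,j'\in\hat N^c:\,j\ne j'} x_{jj'}\le 2-\frac{(n-3)(n-4)}{2}$$ defines a facet of the weak order polytope $P^n_{WO}$.
   Context: Let $N=\{1,\dots,n\}$ and $A_N=\{(i,j): i,j\in N, i\ne j\}$. A weak order on $N$ is a binary relation $W\subseteq N\times N$ that is reflexive, transitive and total; $(i,j)\in W$ is read "$i$ is preferred over or tied with $j$". The characteristic vector of $W$ is $x^W\in\{0,1\}^{A_N}$ with $x^W_{(i,j)}=1$ if $(i,j)\in W$ and $0$ otherwise. The weak order polytope $P^n_{WO}$ is the convex hull of the characteristic vectors of all weak orders on $N$; its points are vectors $x\in\mathbb{R}^{A_N}$ and $x_{ij}$ denotes the coordinate $x_{(i,j)}$. $P^n_{WO}$ has dimension $n(n-1)$. An inequality $\pi x\le\pi_0$ defines a facet of a polytope $P$ if it is valid for $P$ (holds for all $x\in P$) and the face $P\cap\{x:\pi x=\pi_0\}$ is nonempty, proper, and contains $\dim(P)$ affinely independent points. *)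

theory Defs
  imports "HOL-Analysis.Analysis"
begin

text \<open>The ground set N is modelled by a finite type 'n (n = CARD('n)).
  Points of R^{A_N} are embedded in real^('n \<times> 'n); the diagonal coordinates
  are never used (they are 0 for every characteristic vector and have
  coefficient 0 in every inequality), which does not affect convex hulls,
  affine independence or dimension.\<close>

definition arcs :: "('n::finite \<times> 'n) set" where
  "arcs = {(i, j). i \<noteq> j}"

definition weak_order :: "('n::finite \<times> 'n) set \<Rightarrow> bool" where
  "weak_order W \<longleftrightarrow> (\<forall>i. (i, i) \<in> W) \<and> trans W \<and> (\<forall>i j. (i, j) \<in> W \<or> (j, i) \<in> W)"

definition char_vec :: "('n::finite \<times> 'n) set \<Rightarrow> real ^ ('n \<times> 'n)" where
  "char_vec W = (\<chi> a. if a \<in> arcs \<and> a \<in> W then 1 else 0)"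

definition weak_order_polytope :: "(real ^ ('n::finite \<times> 'n)) set" where
  "weak_order_polytope = convex hull {char_vec W | W. weak_order W}"

definition lin_form :: "(('n::finite \<times> 'n) \<Rightarrow> real) \<Rightarrow> real ^ ('n \<times> 'n) \<Rightarrow> real" where
  "lin_form \<pi> x = (\<Sum>a\<in>arcs. \<pi> a * x $ a)"

definition defines_facet ::
  "(real ^ ('n::finite \<times> 'n)) set \<Rightarrow> (('n \<times> 'n) \<Rightarrow> real) \<Rightarrow> real \<Rightarrow> bool" where
  "defines_facet P \<pi> \<pi>0 \<longleftrightarrow>
     (\<forall>x\<in>P. lin_form \<pi> x \<le> \<pi>0) \<and>
     (let F = P \<inter> {x. lin_form \<pi> x = \<pi>0} in
        F \<noteq> {} \<and> F \<noteq> P \<and>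
        (\<exists>S. S \<subseteq> F \<and> finite S \<and> int (card S) = aff_dim P \<and> \<not> affine_dependent S))"

definition coeff8 :: "'n::finite \<Rightarrow> 'n \<Rightarrow> ('n \<times> 'n) \<Rightarrow> real" where
  "coeff8 i1 i2 a =
     (let Nc = UNIV - {i1, i2}; (i, j) = a in
      if i = i1 \<and> j = i2 then 1
      else if i = i1 \<and> j \<in> Nc then 1
      else if i \<in> Nc \<and> j = i1 then 1
      else if i \<in> Nc \<and> j = i2 then -1
      else if i \<in> Nc \<and> j \<in> Nc \<and> i \<noteq> j then -1
      else 0)"

end

theory Submission
  imports Defs
begin


lemma lf_card:
  fixes a b :: "'n::finite"
  assumes ab: "a \<noteq> b"
  shows "lin_form (coeff8 a b) (char_vec W) =
     of_bool ((a,b) \<in> W) + real (card {c\<in>UNIV-{a,b}. (a,c) \<in> W}) + real (card {c\<in>UNIV-{a,b}. (c,a) \<in> W})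
     - real (card {c\<in>UNIV-{a,b}. (c,b) \<in> W})
     - real (card {p. fst p \<in> UNIV-{a,b} \<and> snd p \<in> UNIV-{a,b} \<and> fst p \<noteq> snd p \<and> p \<in> W})"
proof -
  define C where "C = UNIV - {a,b}"
  have eq: "coeff8 a b u * char_vec W $ u = of_bool(u\<in>W \<and> u=(a,b)) + of_bool(u\<in>W \<and> fst u = a \<and> snd u\<in>C)
     + of_bool(u\<in>W \<and> fst u\<in>C \<and> snd u = a) - of_bool(u\<in>W\<and>fst u\<in>C\<and>snd u=b)
     - of_bool(u\<in>W \<and> fst u\<in>C\<and>snd u\<in>C\<and>fst u\<noteq>snd u)" if "u \<in> arcs" for u
    using that ab by (cases u) (auto simp: coeff8_def char_vec_def arcs_def C_def)
  have "lin_form (coeff8 a b) (char_vec W) = (\<Sum>u\<in>arcs. of_bool(u\<in>W \<and> u=(a,b)) + of_bool(u\<in>W \<and> fst u = a \<and> snd u\<in>C)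
     + of_bool(u\<in>W \<and> fst u\<in>C \<and> snd u = a) - of_bool(u\<in>W\<and>fst u\<in>C\<and>snd u=b)
     - of_bool(u\<in>W \<and> fst u\<in>C\<and>snd u\<in>C\<and>fst u\<noteq>snd u))"
    unfolding lin_form_def by (rule sum.cong) (use eq in auto)
  also have "\<dots> = real (card (arcs \<inter> {u. u\<in>W \<and> u=(a,b)})) + real (card (arcs \<inter> {u. u\<in>W \<and> fst u = a \<and> snd u\<in>C}))
     + real (card (arcs \<inter> {u. u\<in>W \<and> fst u\<in>C \<and> snd u = a})) - real (card (arcs \<inter> {u. u\<in>W\<and>fst u\<in>C\<and>snd u=b}))
     - real (card (arcs \<inter> {u. u\<in>W \<and> fst u\<in>C\<and>snd u\<in>C\<and>fst u\<noteq>snd u}))"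
    by (simp add: sum.distrib sum_subtractf)
  also have "arcs \<inter> {u. u\<in>W \<and> u=(a,b)} = (if (a,b) \<in> W then {(a,b)} else {})"
    using ab by (auto simp: arcs_def)
  also have "arcs \<inter> {u. u\<in>W \<and> fst u = a \<and> snd u\<in>C} = Pair a ` {c\<in>C. (a,c) \<in> W}"
    by (auto simp: arcs_def C_def)
  also have "arcs \<inter> {u. u\<in>W \<and> fst u\<in>C \<and> snd u = a} = (\<lambda>c. (c,a)) ` {c\<in>C. (c,a) \<in> W}"
    by (auto simp: arcs_def C_def)
  also have "arcs \<inter> {u. u\<in>W \<and> fst u\<in>C \<and> snd u = b} = (\<lambda>c. (c,b)) ` {c\<in>C. (c,b) \<in> W}"
    by (auto simp: arcs_def C_def)
  also have "arcs \<inter> {u. u\<in>W \<and> fst u\<in>C\<and>snd u\<in>C\<and>fst u\<noteq>snd u} = {p. fst p \<in> C \<and> snd p \<in> C \<and> fst p \<noteq> snd p \<and> p \<in> W}"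
    by (auto simp: arcs_def)
  finally show ?thesis
    by (simp add: card_image inj_on_def C_def)
qed



lemma offdiag_card:
  fixes X :: "'a::finite set"
  shows "card {p. fst p \<in> X \<and> snd p \<in> X \<and> fst p \<noteq> snd p} = card X * card X - card X"
proof -
  have "{p. fst p \<in> X \<and> snd p \<in> X \<and> fst p \<noteq> snd p} = X \<times> X - (\<lambda>c. (c,c)) ` X" by auto
  moreover have "card ((\<lambda>c. (c,c)) ` X) = card X" by (simp add: card_image inj_on_def)
  moreover have "(\<lambda>c. (c,c)) ` X \<subseteq> X \<times> X" by auto
  ultimately show ?thesis by (simp add: card_Diff_subset card_cartesian_product)
qed

lemma wo_formula:
  fixes a b :: "'n::finite"
  assumes ab: "a \<noteq> b" and W: "weak_order W"
  defines "C \<equiv> UNIV - {a,b}"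
  shows "2 * lin_form (coeff8 a b) (char_vec W) =
     2 * of_bool ((a,b) \<in> W) + 2 * (real (card C) + real (card {c\<in>C. (a,c) \<in> W \<and> (c,a) \<in> W}))
     - 2 * real (card {c\<in>C. (c,b) \<in> W}) - real (card C) * (real (card C) - 1)
     - real (card {p. fst p \<in> C \<and> snd p \<in> C \<and> fst p \<noteq> snd p \<and> p \<in> W \<and> prod.swap p \<in> W})"
proof -
  have tot: "\<And>i j. (i,j) \<in> W \<or> (j,i) \<in> W" using W by (auto simp: weak_order_def)
  define Q where "Q = {p. fst p \<in> C \<and> snd p \<in> C \<and> fst p \<noteq> snd p \<and> p \<in> W}"
  define TT where "TT = {p. fst p \<in> C \<and> snd p \<in> C \<and> fst p \<noteq> snd p \<and> p \<in> W \<and> prod.swap p \<in> W}"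
  define S5 where "S5 = {p. fst p \<in> C \<and> snd p \<in> C \<and> fst p \<noteq> snd p}"
  have c1: "card {c\<in>C. (a,c) \<in> W} + card {c\<in>C. (c,a) \<in> W} = card C + card {c\<in>C. (a,c) \<in> W \<and> (c,a) \<in> W}"
  proof -
    have "card {c\<in>C. (a,c) \<in> W} + card {c\<in>C. (c,a) \<in> W} = card ({c\<in>C. (a,c) \<in> W} \<union> {c\<in>C. (c,a) \<in> W}) + card ({c\<in>C. (a,c) \<in> W} \<inter> {c\<in>C. (c,a) \<in> W})"
      by (rule card_Un_Int) auto
    moreover have "{c\<in>C. (a,c) \<in> W} \<union> {c\<in>C. (c,a) \<in> W} = C" using tot by auto
    moreover have "{c\<in>C. (a,c) \<in> W} \<inter> {c\<in>C. (c,a) \<in> W} = {c\<in>C. (a,c) \<in> W \<and> (c,a) \<in> W}" by auto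
    ultimately show ?thesis by simp
  qed
  have c2: "2 * card Q = card S5 + card TT"
  proof -
    have "S5 - Q = prod.swap ` (Q - TT)"
    proof
      show "S5 - Q \<subseteq> prod.swap ` (Q - TT)"
      proof
        fix p assume p: "p \<in> S5 - Q"
        then have "prod.swap p \<in> Q - TT" using tot[of "fst p" "snd p"]
          by (cases p) (auto simp: S5_def Q_def TT_def)
        then show "p \<in> prod.swap ` (Q - TT)" by (metis image_eqI swap_swap)
      qed
      show "prod.swap ` (Q - TT) \<subseteq> S5 - Q"
        by (auto simp: S5_def Q_def TT_def)
    qed
    then have "card (S5 - Q) = card (Q - TT)" by (simp add: card_image)
    moreover have "Q \<subseteq> S5" "TT \<subseteq> Q" by (auto simp: S5_def Q_def TT_def)
    ultimately have "card S5 - card Q = card Q - card TT"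
      by (simp add: card_Diff_subset)
    moreover have "card TT \<le> card Q" "card Q \<le> card S5" using \<open>Q \<subseteq> S5\<close> \<open>TT \<subseteq> Q\<close>
      by (auto intro: card_mono)
    ultimately show ?thesis by linarith
  qed
  have s5: "card S5 = card C * card C - card C" unfolding S5_def by (rule offdiag_card)
  have "card C \<le> card C * card C" by (simp add: le_square)
  then have "real (card C * card C - card C) = real (card C) * (real (card C) - 1)"
    by (simp add: of_nat_diff right_diff_distrib)
  then have c2r: "2 * real (card Q) = real (card C) * (real (card C) - 1) + real (card TT)"
  proof -
    have "real (2 * card Q) = real (card S5 + card TT)" using c2 by (simp only:)
    then have "2 * real (card Q) = real (card S5) + real (card TT)" by simp
    moreover have "real (card S5) = real (card C) * (real (card C) - 1)"
      using s5 \<open>real (card C * card C - card C) = _\<close> by (simp only:)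
    ultimately show ?thesis by simp
  qed
  have c1r: "real (card {c\<in>C. (a,c) \<in> W}) + real (card {c\<in>C. (c,a) \<in> W}) = real (card C) + real (card {c\<in>C. (a,c) \<in> W \<and> (c,a) \<in> W})"
  proof -
    have "real (card {c\<in>C. (a,c) \<in> W} + card {c\<in>C. (c,a) \<in> W}) = real (card C + card {c\<in>C. (a,c) \<in> W \<and> (c,a) \<in> W})"
      using c1 by simp
    then show ?thesis by simp
  qed
  show ?thesis
    using lf_card[OF ab, of W] c1r c2r unfolding C_def Q_def TT_def by simp
qed

lemma t_ineq: "real t * (real t - 1) \<ge> 2 * real t - 2"
proof (cases "t \<le> 1")
  case True then have "t = 0 \<or> t = 1" by auto
  then show ?thesis by auto
next
  case False
  then have "(real t - 1) * (real t - 2) \<ge> 0" by (intro mult_nonneg_nonneg) auto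
  then show ?thesis by (simp add: algebra_simps)
qed



lemma card_C: fixes a b :: "'n::finite" assumes "a \<noteq> b"
  shows "card (UNIV - {a,b}) = CARD('n) - 2"
  using assms by (simp add: card_Diff_subset)

lemma rhs_eq: fixes a b :: "'n::finite" assumes "a \<noteq> b" "CARD('n) \<ge> 4"
  shows "real ((CARD('n) - 3) * (CARD('n) - 4)) = (real (card (UNIV - {a,b})) - 1) * (real (card (UNIV - {a,b})) - 2)"
  using assms by (simp add: card_C of_nat_diff)

lemma valid_wo:
  fixes a b :: "'n::finite"
  assumes ab: "a \<noteq> b" and n4: "CARD('n) \<ge> 4" and W: "weak_order W"
  shows "lin_form (coeff8 a b) (char_vec W) \<le> 2 - real ((CARD('n) - 3) * (CARD('n) - 4)) / 2"
proof -
  define C where "C = UNIV - {a,b}"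
  define m where "m = real (card C)"
  define T where "T = {c\<in>C. (a,c) \<in> W \<and> (c,a) \<in> W}"
  define TT where "TT = {p. fst p \<in> C \<and> snd p \<in> C \<and> fst p \<noteq> snd p \<and> p \<in> W \<and> prod.swap p \<in> W}"
  define B where "B = {c\<in>C. (c,b) \<in> W}"
  have tr: "\<And>x y z. (x,y) \<in> W \<Longrightarrow> (y,z) \<in> W \<Longrightarrow> (x,z) \<in> W"
    using W unfolding weak_order_def trans_def by blast
  have f: "2 * lin_form (coeff8 a b) (char_vec W) = 2 * of_bool ((a,b) \<in> W) + 2 * (m + real (card T))
     - 2 * real (card B) - m * (m - 1) - real (card TT)"
    using wo_formula[OF ab W] unfolding C_def m_def T_def TT_def B_def by simp
  have "{p. fst p \<in> T \<and> snd p \<in> T \<and> fst p \<noteq> snd p} \<subseteq> TT"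
    unfolding T_def TT_def by (auto intro: tr)
  then have "card {p. fst p \<in> T \<and> snd p \<in> T \<and> fst p \<noteq> snd p} \<le> card TT" by (intro card_mono) auto
  then have "card T * card T - card T \<le> card TT" by (simp add: offdiag_card)
  then have "real (card T * card T - card T) \<le> real (card TT)" by linarith
  moreover have "card T \<le> card T * card T" by (simp add: le_square)
  ultimately have tt: "real (card T) * (real (card T) - 1) \<le> real (card TT)"
    by (simp add: of_nat_diff right_diff_distrib)
  have bt: "(a,b) \<in> W \<Longrightarrow> card T \<le> card B"
    by (rule card_mono) (auto simp: T_def B_def intro: tr)
  have r: "real ((CARD('n) - 3) * (CARD('n) - 4)) = (m - 1) * (m - 2)"
    using rhs_eq[OF ab n4] unfolding m_def C_def .
  have alg: "m * (m - 1) - (m - 1) * (m - 2) = 2 * m - 2" by (simp add: algebra_simps)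
  have ti: "real (card T) * (real (card T) - 1) \<ge> 2 * real (card T) - 2" by (rule t_ineq)
  have tn: "real (card T) * (real (card T) - 1) \<ge> 0" by (cases "card T") auto
  show ?thesis
  proof (cases "(a,b) \<in> W")
    case True
    then show ?thesis using f r alg tt tn bt[OF True] by simp
  next
    case False
    then show ?thesis using f r alg tt ti by simp
  qed
qed



definition Wr :: "('n \<Rightarrow> nat) \<Rightarrow> ('n \<times> 'n) set" where
  "Wr r = {p. r (fst p) \<le> r (snd p)}"

lemma Wr_weak: "weak_order (Wr r)"
  unfolding weak_order_def Wr_def trans_def by auto

definition rkf :: "('n \<Rightarrow> nat) \<Rightarrow> 'n \<Rightarrow> 'n \<Rightarrow> 'n \<Rightarrow> 'n \<Rightarrow> nat \<Rightarrow> nat \<Rightarrow> nat \<Rightarrow> nat \<Rightarrow> 'n \<Rightarrow> nat" where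
  "rkf g a b j k ra rb rj rk x = (if x = a then ra else if x = b then rb else if x = j then rj
      else if x = k then rk else g x + 4)"

lemma card2:
  assumes "j \<noteq> k" "j \<in> C" "k \<in> C" "\<forall>c\<in>C. P c \<longrightarrow> c = j \<or> c = k"
  shows "card {c\<in>C. P c} = of_bool (P j) + of_bool (P k)"
proof -
  have "{c\<in>C. P c} = (if P j then {j} else {}) \<union> (if P k then {k} else {})"
    using assms by auto
  then show ?thesis using assms(1) by auto
qed

lemma rank_formula:
  fixes a b j k :: "'n::finite"
  assumes ab: "a \<noteq> b" and jC: "j \<in> UNIV - {a,b}" and kC: "k \<in> UNIV - {a,b}" and jk: "j \<noteq> k"
    and g: "inj g" and le: "ra \<le> 3" "rb \<le> 3" "rj \<le> 3" "rk \<le> 3"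
  shows "2 * lin_form (coeff8 a b) (char_vec (Wr (rkf g a b j k ra rb rj rk))) =
     2 * of_bool (ra \<le> rb) + 2 * (real (card (UNIV - {a,b})) + (of_bool (rj = ra) + of_bool (rk = ra)))
     - 2 * (of_bool (rj \<le> rb) + of_bool (rk \<le> rb))
     - real (card (UNIV - {a,b})) * (real (card (UNIV - {a,b})) - 1) - 2 * of_bool (rj = rk)"
proof -
  define C where "C = UNIV - {a,b}"
  define r where "r = rkf g a b j k ra rb rj rk"
  have ra: "r a = ra" and rb: "r b = rb" and rj: "r j = rj" and rk: "r k = rk"
    using ab jC kC jk by (auto simp: r_def rkf_def)
  have rest: "c \<in> C \<Longrightarrow> c \<noteq> j \<Longrightarrow> c \<noteq> k \<Longrightarrow> r c = g c + 4" for c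
    by (auto simp: r_def rkf_def C_def)
  have jC': "j \<in> C" and kC': "k \<in> C" using jC kC by (auto simp: C_def)
  have t: "card {c\<in>C. (a,c) \<in> Wr r \<and> (c,a) \<in> Wr r} = of_bool (rj = ra) + of_bool (rk = ra)"
  proof -
    have "card {c\<in>C. (a,c) \<in> Wr r \<and> (c,a) \<in> Wr r} = of_bool ((a,j) \<in> Wr r \<and> (j,a) \<in> Wr r) + of_bool ((a,k) \<in> Wr r \<and> (k,a) \<in> Wr r)"
      by (rule card2[OF jk jC' kC']) (use rest le ra in \<open>force simp: Wr_def\<close>)
    then show ?thesis by (auto simp: Wr_def ra rj rk)
  qed
  have bb: "card {c\<in>C. (c,b) \<in> Wr r} = of_bool (rj \<le> rb) + of_bool (rk \<le> rb)"
  proof -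
    have "card {c\<in>C. (c,b) \<in> Wr r} = of_bool ((j,b) \<in> Wr r) + of_bool ((k,b) \<in> Wr r)"
      by (rule card2[OF jk jC' kC']) (use rest le rb in \<open>force simp: Wr_def\<close>)
    then show ?thesis by (auto simp: Wr_def rb rj rk)
  qed
  have "{p. fst p \<in> C \<and> snd p \<in> C \<and> fst p \<noteq> snd p \<and> p \<in> Wr r \<and> prod.swap p \<in> Wr r}
     = (if rj = rk then {(j,k),(k,j)} else {})"
  proof -
    have "p \<in> {(j,k),(k,j)}" if "fst p \<in> C" "snd p \<in> C" "fst p \<noteq> snd p" "r (fst p) = r (snd p)" for p
    proof -
      obtain x y where p: "p = (x,y)" by (cases p)
      have "x \<in> {j,k}"
      proof (rule ccontr)
        assume "x \<notin> {j,k}"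
        then have rx: "r x = g x + 4" using rest that p by auto
        show False
        proof (cases "y \<in> {j,k}")
          case True then show False using rx that p le rj rk by auto
        next
          case False then have "r y = g y + 4" using rest that p by auto
          then show False using rx that p g by (auto dest: injD)
        qed
      qed
      moreover have "y \<in> {j,k}"
      proof (rule ccontr)
        assume "y \<notin> {j,k}"
        then have "r y = g y + 4" using rest that p by auto
        then show False using \<open>x \<in> {j,k}\<close> that p le rj rk by auto
      qed
      ultimately show ?thesis using that p by auto
    qed
    note H0 = this
    have H: "p \<in> {(j,k),(k,j)}" if "fst p \<in> C" "snd p \<in> C" "fst p \<noteq> snd p" "p \<in> Wr r" "prod.swap p \<in> Wr r" for p
    proof -
      have "r (fst p) = r (snd p)" using that(4,5) by (cases p) (auto simp: Wr_def)
      then show ?thesis using H0 that(1-3) by blast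
    qed
    show ?thesis
    proof (cases "rj = rk")
      case True
      show ?thesis
      proof
        show "{p. fst p \<in> C \<and> snd p \<in> C \<and> fst p \<noteq> snd p \<and> p \<in> Wr r \<and> prod.swap p \<in> Wr r}
          \<subseteq> (if rj = rk then {(j,k),(k,j)} else {})" using H True by auto
        show "(if rj = rk then {(j,k),(k,j)} else {}) \<subseteq> {p. fst p \<in> C \<and> snd p \<in> C \<and> fst p \<noteq> snd p \<and> p \<in> Wr r \<and> prod.swap p \<in> Wr r}"
          using True jC' kC' jk rj rk by (auto simp: Wr_def)
      qed
    next
      case False
      have "p \<notin> {p. fst p \<in> C \<and> snd p \<in> C \<and> fst p \<noteq> snd p \<and> p \<in> Wr r \<and> prod.swap p \<in> Wr r}" for p
      proof
        assume "p \<in> {p. fst p \<in> C \<and> snd p \<in> C \<and> fst p \<noteq> snd p \<and> p \<in> Wr r \<and> prod.swap p \<in> Wr r}"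
        then have "p \<in> {(j,k),(k,j)}" "p \<in> Wr r" "prod.swap p \<in> Wr r" using H by auto
        then show False using False rj rk by (auto simp: Wr_def)
      qed
      then show ?thesis using False by auto
    qed
  qed
  then have tt: "card {p. fst p \<in> C \<and> snd p \<in> C \<and> fst p \<noteq> snd p \<and> p \<in> Wr r \<and> prod.swap p \<in> Wr r} = 2 * of_bool (rj = rk)"
    using jk by auto
  have E: "2 * lin_form (coeff8 a b) (char_vec (Wr r)) =
     2 * of_bool ((a,b) \<in> Wr r) + 2 * (real (card C) + real (card {c\<in>C. (a,c) \<in> Wr r \<and> (c,a) \<in> Wr r}))
     - 2 * real (card {c\<in>C. (c,b) \<in> Wr r}) - real (card C) * (real (card C) - 1)
     - real (card {p. fst p \<in> C \<and> snd p \<in> C \<and> fst p \<noteq> snd p \<and> p \<in> Wr r \<and> prod.swap p \<in> Wr r})"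
    unfolding C_def by (rule wo_formula[OF ab Wr_weak])
  have abr: "((a,b) \<in> Wr r) = (ra \<le> rb)" by (simp add: Wr_def ra rb)
  have "2 * lin_form (coeff8 a b) (char_vec (Wr r)) =
     2 * of_bool (ra \<le> rb) + 2 * (real (card C) + (of_bool (rj = ra) + of_bool (rk = ra)))
     - 2 * (of_bool (rj \<le> rb) + of_bool (rk \<le> rb))
     - real (card C) * (real (card C) - 1) - 2 * of_bool (rj = rk)"
    using E unfolding t bb tt abr by simp
  then show ?thesis unfolding C_def r_def .
qed



abbreviation cvr where "cvr g a b j k ra rb rj rk \<equiv> char_vec (Wr (rkf g a b j k ra rb rj rk))"

lemma diff1:
  fixes a b j k :: "'n::finite"
  assumes "a \<noteq> b" "j \<noteq> a" "j \<noteq> b" "k \<noteq> a" "k \<noteq> b" "j \<noteq> k"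
  shows "cvr g a b j k 0 0 1 2 - cvr g a b j k 0 1 2 3 = axis (b,a) 1"
  using assms unfolding vec_eq_iff
  by (auto simp: char_vec_def Wr_def rkf_def axis_def arcs_def)

lemma diff2:
  fixes a b j k :: "'n::finite"
  assumes "a \<noteq> b" "j \<noteq> a" "j \<noteq> b" "k \<noteq> a" "k \<noteq> b" "j \<noteq> k"
  shows "cvr g a b j k 0 0 0 1 - cvr g a b j k 0 0 1 2 = axis (j,a) 1 + axis (j,b) 1"
  using assms unfolding vec_eq_iff
  by (auto simp: char_vec_def Wr_def rkf_def axis_def arcs_def)

lemma diff3:
  fixes a b j k :: "'n::finite"
  assumes "a \<noteq> b" "j \<noteq> a" "j \<noteq> b" "k \<noteq> a" "k \<noteq> b" "j \<noteq> k"
  shows "cvr g a b j k 0 0 0 1 - cvr g a b j k 0 1 0 2 = axis (b,a) 1 + axis (b,j) 1"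
  using assms unfolding vec_eq_iff
  by (auto simp: char_vec_def Wr_def rkf_def axis_def arcs_def)

lemma diff4:
  fixes a b j k :: "'n::finite"
  assumes "a \<noteq> b" "j \<noteq> a" "j \<noteq> b" "k \<noteq> a" "k \<noteq> b" "j \<noteq> k"
  shows "cvr g a b j k 0 1 0 2 - cvr g a b j k 1 0 1 2 = axis (a,b) 1 + axis (j,b) 1 - axis (b,a) 1 - axis (b,j) 1"
  using assms unfolding vec_eq_iff
  by (auto simp: char_vec_def Wr_def rkf_def axis_def arcs_def)

lemma diff5:
  fixes a b j k :: "'n::finite"
  assumes "a \<noteq> b" "j \<noteq> a" "j \<noteq> b" "k \<noteq> a" "k \<noteq> b" "j \<noteq> k"
  shows "cvr g a b j k 1 0 1 1 - cvr g a b j k 1 0 1 2 = axis (k,a) 1 + axis (k,j) 1"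
  using assms unfolding vec_eq_iff
  by (auto simp: char_vec_def Wr_def rkf_def axis_def arcs_def)

lemma diff6:
  fixes a b j k :: "'n::finite"
  assumes "a \<noteq> b" "j \<noteq> a" "j \<noteq> b" "k \<noteq> a" "k \<noteq> b" "j \<noteq> k"
  shows "cvr g a b j k 1 0 1 1 - cvr g a b j k 2 0 2 1 = axis (a,k) 1 + axis (j,k) 1"
  using assms unfolding vec_eq_iff
  by (auto simp: char_vec_def Wr_def rkf_def axis_def arcs_def)



lemma rank_val:
  fixes a b j k :: "'n::finite"
  assumes ab: "a \<noteq> b" and n4: "CARD('n) \<ge> 4" and jC: "j \<in> UNIV - {a,b}" and kC: "k \<in> UNIV - {a,b}" and jk: "j \<noteq> k"
    and g: "inj g" and le: "ra \<le> 3" "rb \<le> 3" "rj \<le> 3" "rk \<le> 3"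
  shows "lin_form (coeff8 a b) (cvr g a b j k ra rb rj rk) - (2 - real ((CARD('n) - 3) * (CARD('n) - 4)) / 2)
     = of_bool (ra \<le> rb) + of_bool (rj = ra) + of_bool (rk = ra) - of_bool (rj \<le> rb) - of_bool (rk \<le> rb) - of_bool (rj = rk) - 1"
proof -
  define m where "m = real (card (UNIV - {a,b}))"
  have f: "2 * lin_form (coeff8 a b) (cvr g a b j k ra rb rj rk) =
     2 * of_bool (ra \<le> rb) + 2 * (m + (of_bool (rj = ra) + of_bool (rk = ra)))
     - 2 * (of_bool (rj \<le> rb) + of_bool (rk \<le> rb)) - m * (m - 1) - 2 * of_bool (rj = rk)"
    using rank_formula[OF ab jC kC jk g le] unfolding m_def .
  have r: "real ((CARD('n) - 3) * (CARD('n) - 4)) = (m - 1) * (m - 2)"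
    using rhs_eq[OF ab n4] unfolding m_def .
  have alg: "m * (m - 1) - (m - 1) * (m - 2) = 2 * m - 2" by (simp add: algebra_simps)
  show ?thesis using f r alg by simp
qed

lemma pv_inner:
  "lin_form \<pi> x = (\<chi> u. if u \<in> arcs then \<pi> u else 0) \<bullet> x"
proof -
  have "(\<chi> u. if u \<in> arcs then \<pi> u else 0) \<bullet> x = (\<Sum>u\<in>UNIV. (if u \<in> arcs then \<pi> u * x $ u else 0))"
    unfolding inner_vec_def by (intro sum.cong) auto
  also have "\<dots> = (\<Sum>u\<in>arcs. \<pi> u * x $ u)"
    by (simp add: sum.If_cases)
  finally show ?thesis unfolding lin_form_def by simp
qed

lemma dimZ_gen: "dim {x :: real^('n::finite\<times>'n). \<forall>i. i\<notin>arcs \<longrightarrow> x$i = 0} = card (arcs :: ('n\<times>'n) set)"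
  using dim_substandard_cart[of "arcs :: ('n\<times>'n) set", where 'a=real] unfolding dim_vec_eq by simp

lemma subZ_gen: "subspace {x :: real^('n::finite\<times>'n). \<forall>i. i\<notin>arcs \<longrightarrow> x$i = 0}"
  using subspace_substandard_cart[of "\<lambda>i. i \<notin> (arcs :: ('n\<times>'n) set)", where 'a=real] unfolding subspace_vec_eq by simp



lemma two_in_C:
  fixes a b c :: "'n::finite"
  assumes "a \<noteq> b" "CARD('n) \<ge> 4" "c \<in> UNIV - {a,b}"
  obtains c' where "c' \<in> UNIV - {a,b}" "c' \<noteq> c"
proof -
  have "card {a,b,c} \<le> 3" by (simp add: card_insert_if)
  then have "card (UNIV - {a,b,c}) \<ge> 1"
    using assms by (simp add: card_Diff_subset)
  then obtain c' where "c' \<in> UNIV - {a,b,c}" by (metis all_not_in_conv card.empty not_one_le_zero)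
  then show ?thesis using that by auto
qed

theorem mainTheorem8:
  fixes i1 i2 :: "'n::finite"
  assumes "CARD('n) \<ge> 4" and "i1 \<noteq> i2"
  shows "defines_facet (weak_order_polytope :: (real ^ ('n \<times> 'n)) set) (coeff8 i1 i2)
           (2 - real ((CARD('n) - 3) * (CARD('n) - 4)) / 2)"
proof -
  define a where "a = i1"
  define b where "b = i2"
  have ab: "a \<noteq> b" and n4: "CARD('n) \<ge> 4" using assms by (auto simp: a_def b_def)
  define rhs where "rhs = 2 - real ((CARD('n) - 3) * (CARD('n) - 4)) / 2"
  define \<pi> where "\<pi> = coeff8 a b"
  define pv where "pv = (\<chi> u. if u \<in> arcs then \<pi> u else 0)"
  have lf: "\<And>x. lin_form \<pi> x = pv \<bullet> x" unfolding pv_def by (rule pv_inner)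
  define Gen where "Gen = {char_vec W | W :: ('n \<times> 'n) set. weak_order W}"
  define P where "P = (weak_order_polytope :: (real ^ ('n \<times> 'n)) set)"
  have P: "P = convex hull Gen" unfolding P_def Gen_def weak_order_polytope_def ..
  define V where "V = {x \<in> Gen. lin_form \<pi> x = rhs}"
  define C where "C = (UNIV :: 'n set) - {a,b}"
  obtain g :: "'n \<Rightarrow> nat" where g: "inj g"
    using finite_imp_inj_to_nat_seg[of "UNIV :: 'n set"] by auto
  have GenP: "Gen \<subseteq> P" unfolding P by (rule hull_subset)
  have valid: "\<forall>x\<in>P. lin_form \<pi> x \<le> rhs"
  proof -
    have "Gen \<subseteq> {x. pv \<bullet> x \<le> rhs}"
      using valid_wo[OF ab n4] unfolding Gen_def rhs_def \<pi>_def lf[symmetric] by auto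
    then have "P \<subseteq> {x. pv \<bullet> x \<le> rhs}" unfolding P by (rule hull_minimal) (rule convex_halfspace_le)
    then show ?thesis using lf by auto
  qed
  have inGen: "cvr g a b j k ra rb rj rk \<in> Gen" for j k ra rb rj rk
    unfolding Gen_def using Wr_weak by blast
  have inV: "cvr g a b j k ra rb rj rk \<in> V"
    if "j \<in> C" "k \<in> C" "j \<noteq> k" "ra \<le> 3" "rb \<le> 3" "rj \<le> 3" "rk \<le> 3"
      "of_bool (ra \<le> rb) + of_bool (rj = ra) + of_bool (rk = ra) - of_bool (rj \<le> rb) - of_bool (rk \<le> rb) - of_bool (rj = rk) = (1::real)"
    for j k ra rb rj rk
    using rank_val[OF ab n4 _ _ _ g, of j k ra rb rj rk] that inGen
    unfolding V_def C_def rhs_def \<pi>_def by auto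
  have cC: "card C = CARD('n) - 2" unfolding C_def by (rule card_C[OF ab])
  then have "C \<noteq> {}" using n4 by auto
  then obtain j0 where j0: "j0 \<in> C" by auto
  obtain k0 where k0: "k0 \<in> C" "k0 \<noteq> j0" using two_in_C[OF ab n4, of j0] j0 unfolding C_def by auto
  define v0 where "v0 = cvr g a b j0 k0 0 1 2 3"
  have v0V: "v0 \<in> V" unfolding v0_def by (rule inV) (use j0 k0 in auto)
  define p where "p = cvr g a b j0 k0 1 0 0 2"
  have pGen: "p \<in> Gen" unfolding p_def by (rule inGen)
  have plt: "lin_form \<pi> p < rhs"
    using rank_val[OF ab n4 _ _ _ g, of j0 k0 1 0 0 2] j0 k0
    unfolding p_def C_def rhs_def \<pi>_def by auto
  have finGen: "finite Gen"
  proof -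
    have "Gen \<subseteq> char_vec ` UNIV" unfolding Gen_def by auto
    then show ?thesis by (rule finite_subset) simp
  qed
  have finV: "finite V" unfolding V_def using finGen by simp
  have VGen: "V \<subseteq> Gen" unfolding V_def by auto
  define M where "M = span (insert (axis (a,b) 1) ((\<lambda>x. x - v0) ` V))"
  have dM: "x - y \<in> M" if "x \<in> V" "y \<in> V" for x y
  proof -
    have "x - v0 \<in> M" "y - v0 \<in> M" unfolding M_def using that by (auto intro: span_base)
    then have "(x - v0) - (y - v0) \<in> M" unfolding M_def by (rule span_diff)
    then show ?thesis by simp
  qed
  have eab: "axis (a,b) 1 \<in> M" unfolding M_def by (auto intro: span_base)
  have Msub: "subspace M" unfolding M_def by (rule subspace_span)
  have loc: "axis (b,a) 1 \<in> M \<and> axis (c,a) 1 \<in> M \<and> axis (c,b) 1 \<in> M \<and> axis (b,c) 1 \<in> M \<and> axis (a,c) 1 \<in> M \<and> axis (c,c') 1 \<in> M"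
    if cC: "c \<in> C" "c' \<in> C" "c \<noteq> c'" for c c'
  proof -
    have ne: "c \<noteq> a" "c \<noteq> b" "c' \<noteq> a" "c' \<noteq> b" using cC unfolding C_def by auto
    have d: "cvr g a b j k ra rb rj rk - cvr g a b j k ra' rb' rj' rk' \<in> M"
      if "j \<in> C" "k \<in> C" "j \<noteq> k" "ra \<le> 3" "rb \<le> 3" "rj \<le> 3" "rk \<le> 3"
      "of_bool (ra \<le> rb) + of_bool (rj = ra) + of_bool (rk = ra) - of_bool (rj \<le> rb) - of_bool (rk \<le> rb) - of_bool (rj = rk) = (1::real)"
      "ra' \<le> 3" "rb' \<le> 3" "rj' \<le> 3" "rk' \<le> 3"
      "of_bool (ra' \<le> rb') + of_bool (rj' = ra') + of_bool (rk' = ra') - of_bool (rj' \<le> rb') - of_bool (rk' \<le> rb') - of_bool (rj' = rk') = (1::real)"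
      for j k ra rb rj rk ra' rb' rj' rk'
      using that by (intro dM inV) auto
    have m1: "axis (b,a) 1 \<in> M" using d[of c c' 0 0 1 2 0 1 2 3] diff1[OF ab ne, of g] cC by simp
    have m2: "axis (c,a) 1 + axis (c,b) 1 \<in> M" using d[of c c' 0 0 0 1 0 0 1 2] diff2[OF ab ne, of g] cC by simp
    have m3: "axis (b,a) 1 + axis (b,c) 1 \<in> M" using d[of c c' 0 0 0 1 0 1 0 2] diff3[OF ab ne, of g] cC by simp
    have m4: "axis (a,b) 1 + axis (c,b) 1 - axis (b,a) 1 - axis (b,c) 1 \<in> M"
      using d[of c c' 0 1 0 2 1 0 1 2] diff4[OF ab ne, of g] cC by simp
    have m5: "axis (c,a) 1 + axis (c,c') 1 \<in> M"
      using d[of c' c 1 0 1 1 1 0 1 2] diff5[OF ab ne(3,4,1,2), of g] cC by simp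
    have m6: "axis (a,c) 1 + axis (c',c) 1 \<in> M"
      using d[of c' c 1 0 1 1 2 0 2 1] diff6[OF ab ne(3,4,1,2), of g] cC by simp
    have m5': "axis (c',a) 1 + axis (c',c) 1 \<in> M"
      using d[of c c' 1 0 1 1 1 0 1 2] diff5[OF ab ne, of g] cC by simp
    have m2': "axis (c',a) 1 + axis (c',b) 1 \<in> M" using d[of c' c 0 0 0 1 0 0 1 2] diff2[OF ab ne(3,4,1,2), of g] cC by simp
    have m3': "axis (b,a) 1 + axis (b,c') 1 \<in> M" using d[of c' c 0 0 0 1 0 1 0 2] diff3[OF ab ne(3,4,1,2), of g] cC by simp
    have m4': "axis (a,b) 1 + axis (c',b) 1 - axis (b,a) 1 - axis (b,c') 1 \<in> M"
      using d[of c' c 0 1 0 2 1 0 1 2] diff4[OF ab ne(3,4,1,2), of g] cC by simp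
    have sd: "x \<in> M \<Longrightarrow> y \<in> M \<Longrightarrow> x - y \<in> M" and sa: "x \<in> M \<Longrightarrow> y \<in> M \<Longrightarrow> x + y \<in> M" for x y
      using Msub by (auto simp: subspace_def intro: subspace_diff[OF Msub])
    have bc: "axis (b,c) 1 \<in> M" using sd[OF m3 m1] by simp
    have cb: "axis (c,b) 1 \<in> M" using sd[OF sa[OF sa[OF m4 m1] bc] eab] by (simp add: algebra_simps)
    have ca: "axis (c,a) 1 \<in> M" using sd[OF m2 cb] by simp
    have bc': "axis (b,c') 1 \<in> M" using sd[OF m3' m1] by simp
    have cb': "axis (c',b) 1 \<in> M" using sd[OF sa[OF sa[OF m4' m1] bc'] eab] by (simp add: algebra_simps)
    have ca': "axis (c',a) 1 \<in> M" using sd[OF m2' cb'] by simp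
    have cc': "axis (c,c') 1 \<in> M" using sd[OF m5 ca] by simp
    have c'c: "axis (c',c) 1 \<in> M" using sd[OF m5' ca'] by simp
    have ac: "axis (a,c) 1 \<in> M" using sd[OF m6 c'c] by simp
    show ?thesis using m1 ca cb bc ac cc' by simp
  qed
  have inC: "x \<in> C \<longleftrightarrow> x \<noteq> a \<and> x \<noteq> b" for x unfolding C_def by auto
  have other: "\<exists>c'. c' \<in> C \<and> c' \<noteq> c" if "c \<in> C" for c
    using two_in_C[OF ab n4, of c] that unfolding C_def by metis
  have allax: "axis u 1 \<in> M" if "u \<in> arcs" for u
  proof -
    define x where "x = fst u"
    define y where "y = snd u"
    have u: "u = (x,y)" and xy: "x \<noteq> y" using that by (auto simp: arcs_def x_def y_def)
    consider "x = a" "y = b" | "x = b" "y = a" | "x = a" "y \<in> C" | "x = b" "y \<in> C"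
      | "x \<in> C" "y = a" | "x \<in> C" "y = b" | "x \<in> C" "y \<in> C"
      using xy inC by blast
    then show ?thesis
    proof cases
      case 1 then show ?thesis using eab u by simp
    next
      case 2 then show ?thesis using loc[OF j0 k0(1) k0(2)[symmetric]] u by simp
    next
      case 3 then obtain c' where "c' \<in> C" "c' \<noteq> y" using other by blast
      then show ?thesis using loc[of y c'] 3 u by simp
    next
      case 4 then obtain c' where "c' \<in> C" "c' \<noteq> y" using other by blast
      then show ?thesis using loc[of y c'] 4 u by simp
    next
      case 5 then obtain c' where "c' \<in> C" "c' \<noteq> x" using other by blast
      then show ?thesis using loc[of x c'] 5 u by simp
    next
      case 6 then obtain c' where "c' \<in> C" "c' \<noteq> x" using other by blast
      then show ?thesis using loc[of x c'] 6 u by simp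
    next
      case 7 then show ?thesis using loc[of x y] xy u by simp
    qed
  qed
  define Z where "Z = {x :: real ^ ('n \<times> 'n). \<forall>i. i \<notin> arcs \<longrightarrow> x $ i = 0}"
  have ZM: "Z \<subseteq> M"
  proof
    fix x assume x: "x \<in> Z"
    have "x = (\<Sum>u\<in>UNIV. (x $ u) *\<^sub>R axis u 1)"
      using basis_expansion[of x] by (simp add: scalar_mult_eq_scaleR)
    also have "\<dots> \<in> M"
    proof (rule subspace_sum[OF Msub])
      fix u :: "'n \<times> 'n"
      show "(x $ u) *\<^sub>R axis u 1 \<in> M"
      proof (cases "u \<in> arcs")
        case True then show ?thesis using allax subspace_scale[OF Msub] by blast
      next
        case False then have "x $ u = 0" using x unfolding Z_def by blast
        then show ?thesis using subspace_0[OF Msub] by simp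
      qed
    qed
    finally show "x \<in> M" .
  qed
  have dimZ: "dim Z = card (arcs :: ('n \<times> 'n) set)"
    unfolding Z_def by (rule dimZ_gen)
  have subZ: "subspace Z"
    unfolding Z_def by (rule subZ_gen)
  define \<Delta> where "\<Delta> = (\<lambda>x. x - v0) ` V"
  have "dim Z \<le> dim M" by (rule dim_subset[OF ZM])
  also have "dim M = dim (insert (axis (a,b) 1) \<Delta>)" unfolding M_def \<Delta>_def by simp
  also have "\<dots> \<le> dim \<Delta> + 1" by (simp add: dim_insert)
  finally have dimD: "card (arcs :: ('n \<times> 'n) set) \<le> dim \<Delta> + 1" using dimZ by simp
  have affV: "aff_dim V = int (dim \<Delta>)" unfolding \<Delta>_def
    by (rule aff_dim_eq_dim_subtract) (rule hull_inc[OF v0V])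
  have GenZ: "Gen \<subseteq> Z" unfolding Gen_def Z_def by (auto simp: char_vec_def)
  have affP: "aff_dim P = aff_dim Gen" unfolding P by (rule aff_dim_convex_hull)
  have "aff_dim Gen \<le> aff_dim Z" by (rule aff_dim_subset[OF GenZ])
  also have "\<dots> = int (card (arcs :: ('n \<times> 'n) set))" using aff_dim_subspace[OF subZ] dimZ by simp
  finally have up: "aff_dim Gen \<le> int (card (arcs :: ('n \<times> 'n) set))" .
  have "affine hull V \<subseteq> {x. pv \<bullet> x = rhs}"
    by (rule hull_minimal) (auto simp: V_def lf affine_hyperplane)
  then have pnot: "p \<notin> affine hull V" using plt lf by auto
  have "aff_dim (insert p V) = aff_dim V + 1" using pnot by (simp add: aff_dim_insert)
  moreover have "aff_dim (insert p V) \<le> aff_dim Gen" using pGen VGen by (intro aff_dim_subset) auto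
  ultimately have affPV: "aff_dim P = aff_dim V + 1" using up affV dimD affP by linarith
  obtain S where S: "S \<subseteq> V" "\<not> affine_dependent S" "affine hull V = affine hull S"
    using affine_basis_exists[of V] by blast
  have cardS: "int (card S) = aff_dim P"
    using aff_dim_affine_independent[OF S(2)] aff_dim_affine_hull2[OF S(3)] affPV by simp
  have VF: "V \<subseteq> P \<inter> {x. lin_form \<pi> x = rhs}" using VGen GenP unfolding V_def by auto
  have "defines_facet P \<pi> rhs"
    unfolding defines_facet_def Let_def
  proof (intro conjI)
    show "\<forall>x\<in>P. lin_form \<pi> x \<le> rhs" by (rule valid)
    show "P \<inter> {x. lin_form \<pi> x = rhs} \<noteq> {}" using VF v0V by blast
    show "P \<inter> {x. lin_form \<pi> x = rhs} \<noteq> P" using pGen GenP plt by auto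
    show "\<exists>S. S \<subseteq> P \<inter> {x. lin_form \<pi> x = rhs} \<and> finite S \<and> int (card S) = aff_dim P \<and> \<not> affine_dependent S"
      using S VF cardS finite_subset[OF S(1) finV] by blast
  qed
  then show ?thesis unfolding P_def \<pi>_def rhs_def a_def b_def .
qed

end
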